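(* Assume the system $\dot x(t)=f(x_t,u(t))$ as in the context is robustly forward complete. Let $S\subseteq\mathcal X^n$ be compact, $\mathcal U\subseteq\mathbb R^m$ bounded and $T>0$. Then the closure in $\mathcal X^n$ of $\mathcal R^T_{\mathcal U}(S)=\{x_t^{\xi,u}:\ 0\le t\le T,\ u\in\mathcal M_{\mathcal U},\ \xi\in S\}$ is compact.
   Context: Fix $\theta>0$; $\mathcal X^n=C([-\theta,0],\mathbb R^n)$ with norm $\|\xi\|_{\mathcal X}=\max_{s\in[-\theta,0]}|\xi(s)|$; $x_t(s)=x(t+s)$. $\mathcal M$: measurable locally essentially bounded $u:\mathbb R_{\ge0}\to\mathbb R^m$, $\|u\|$ the essential supremum on $[0,\infty)$; $\mathcal M_{\mathcal U}$: those with values in $\mathcal U$. $f:\mathcal X^n\times\mathbb R^m\to\mathbb R^n$ is locally Lipschitz and maps bounded sets to bounded sets; $x(\cdot,\xi,u)$ is the unique maximal solution with $x(s)=\xi(s)$ on $[-\theta,0]$ and input $u$, and $x_t^{\xi,u}(s)=x(t+s,\xi,u)$. Robustly forward complete: every maximal solution is defined for all $t\ge0$ and for every $T,R>0$, $\sup\{\|x_t^{\xi,u}\|_{\mathcal X}:\|\xi\|_{\mathcal X}\le R,\|u\|\le R,t\in[0,T]\}<\infty$. *)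

theory Defs
  imports "HOL-Analysis.Analysis"
begin

text \<open>State space X^n = C([-theta,0], R^n) with the sup-norm metric, realised as the library's
  metric space of (bounded) continuous functions on the topological space [-theta,0]
  (elements are extensional, i.e. undefined outside [-theta,0]).\<close>
definition Xspace :: "real \<Rightarrow> (real \<Rightarrow> real^'n) metric" where
  "Xspace \<theta> = cfunspace (top_of_set {-\<theta>..0}) euclidean_metric"

definition xnorm :: "real \<Rightarrow> (real \<Rightarrow> real^'n) \<Rightarrow> real" where
  "xnorm \<theta> \<xi> = (SUP s\<in>{-\<theta>..0}. norm (\<xi> s))"

definition hist :: "real \<Rightarrow> (real \<Rightarrow> real^'n) \<Rightarrow> real \<Rightarrow> (real \<Rightarrow> real^'n)" where
  "hist \<theta> x t = restrict (\<lambda>s. x (t + s)) {-\<theta>..0}"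

definition inputs :: "(real \<Rightarrow> real^'m) set" where
  "inputs = {u. u \<in> borel_measurable (lebesgue_on {0..}) \<and>
                (\<forall>T\<ge>0. \<exists>C. AE s in lebesgue_on {0..T}. norm (u s) \<le> C)}"

definition inputs_in :: "(real^'m) set \<Rightarrow> (real \<Rightarrow> real^'m) set" where
  "inputs_in U = {u \<in> inputs. \<forall>t\<ge>0. u t \<in> U}"

definition unorm_le :: "(real \<Rightarrow> real^'m) \<Rightarrow> real \<Rightarrow> bool" where
  "unorm_le u R \<longleftrightarrow> (AE t in lebesgue_on {0..}. norm (u t) \<le> R)"

definition loc_lipschitz ::
  "real \<Rightarrow> ((real \<Rightarrow> real^'n) \<Rightarrow> real^'m \<Rightarrow> real^'n) \<Rightarrow> bool" where
  "loc_lipschitz \<theta> f \<longleftrightarrow>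
     (\<forall>\<xi>0\<in>mspace (Xspace \<theta>). \<forall>v0. \<exists>r>0. \<exists>L.
        \<forall>\<xi>1\<in>mspace (Xspace \<theta>). \<forall>\<xi>2\<in>mspace (Xspace \<theta>). \<forall>v1 v2.
          mdist (Xspace \<theta>) \<xi>1 \<xi>0 < r \<and> dist v1 v0 < r \<and>
          mdist (Xspace \<theta>) \<xi>2 \<xi>0 < r \<and> dist v2 v0 < r \<longrightarrow>
          norm (f \<xi>1 v1 - f \<xi>2 v2) \<le> L * (mdist (Xspace \<theta>) \<xi>1 \<xi>2 + dist v1 v2))"

definition bounded_on_bounded ::
  "real \<Rightarrow> ((real \<Rightarrow> real^'n) \<Rightarrow> real^'m \<Rightarrow> real^'n) \<Rightarrow> bool" where
  "bounded_on_bounded \<theta> f \<longleftrightarrow>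
     (\<forall>R. \<exists>C. \<forall>\<xi>\<in>mspace (Xspace \<theta>). \<forall>v.
        xnorm \<theta> \<xi> \<le> R \<and> norm v \<le> R \<longrightarrow> norm (f \<xi> v) \<le> C)"

text \<open>x is a (Caratheodory) solution on [-theta, inf) of x'(t) = f(x_t, u(t)) with
  initial history xi, written in integral form.\<close>
definition is_solution ::
  "real \<Rightarrow> ((real \<Rightarrow> real^'n) \<Rightarrow> real^'m \<Rightarrow> real^'n) \<Rightarrow> (real \<Rightarrow> real^'n)
     \<Rightarrow> (real \<Rightarrow> real^'m) \<Rightarrow> (real \<Rightarrow> real^'n) \<Rightarrow> bool" where
  "is_solution \<theta> f \<xi> u x \<longleftrightarrow>
     (\<forall>s\<in>{-\<theta>..0}. x s = \<xi> s) \<and> continuous_on {-\<theta>..} x \<and>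
     (\<forall>t\<ge>0. ((\<lambda>s. f (hist \<theta> x s) (u s)) has_integral (x t - x 0)) {0..t})"

definition RFC ::
  "real \<Rightarrow> ((real \<Rightarrow> real^'n) \<Rightarrow> real^'m \<Rightarrow> real^'n) \<Rightarrow> bool" where
  "RFC \<theta> f \<longleftrightarrow>
     (\<forall>\<xi>\<in>mspace (Xspace \<theta>). \<forall>u\<in>inputs. \<exists>x. is_solution \<theta> f \<xi> u x) \<and>
     (\<forall>T>0. \<forall>R>0. \<exists>C. \<forall>\<xi>\<in>mspace (Xspace \<theta>). \<forall>u\<in>inputs. \<forall>x. \<forall>t\<in>{0..T}.
        xnorm \<theta> \<xi> \<le> R \<and> unorm_le u R \<and> is_solution \<theta> f \<xi> u x
          \<longrightarrow> xnorm \<theta> (hist \<theta> x t) \<le> C)"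

definition reach_set ::
  "real \<Rightarrow> ((real \<Rightarrow> real^'n) \<Rightarrow> real^'m \<Rightarrow> real^'n) \<Rightarrow> real \<Rightarrow> (real^'m) set
     \<Rightarrow> (real \<Rightarrow> real^'n) set \<Rightarrow> (real \<Rightarrow> real^'n) set" where
  "reach_set \<theta> f T U S =
     {hist \<theta> x t | t u \<xi> x. 0 \<le> t \<and> t \<le> T \<and> u \<in> inputs_in U \<and> \<xi> \<in> S \<and>
                           is_solution \<theta> f \<xi> u x}"

end

theory Submission
  imports Defs "HOL-Complex_Analysis.Great_Picard"
begin
lemma topspace_I [simp]: "topspace (top_of_set {-\<theta>..0::real}) = {-\<theta>..0}"
  by simp

lemma Xspace_mem:
  assumes "\<theta> \<ge> 0"
  shows "h \<in> mspace (Xspace \<theta>) \<longleftrightarrow> h \<in> extensional {-\<theta>..0} \<and> continuous_on {-\<theta>..0} h"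
proof -
  have "compactin (top_of_set {-\<theta>..0::real}) {-\<theta>..0}"
    by (simp add: compactin_subtopology)
  then show ?thesis
    unfolding Xspace_def
    by (subst compactin_mspace_cfunspace) (auto simp: continuous_map_iff_continuous)
qed

lemma Xspace_dist_le:
  assumes "h \<in> mspace (Xspace \<theta>)" "g \<in> mspace (Xspace \<theta>)" "s \<in> {-\<theta>..0}"
  shows "dist (h s) (g s) \<le> mdist (Xspace \<theta>) h g"
  using mdist_cfunspace_imp_mdist_le[of h "top_of_set {-\<theta>..0}" euclidean_metric g "mdist (Xspace \<theta>) h g" s] assms
  by (simp add: Xspace_def)

lemma Xspace_le_dist:
  assumes "0 \<le> B" "\<And>s. s \<in> {-\<theta>..0} \<Longrightarrow> dist (h s) (g s) \<le> B"
  shows "mdist (Xspace \<theta>) h g \<le> B"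
  unfolding Xspace_def using assms by (intro mdist_cfunspace_le) auto

lemma xnorm_ge:
  assumes "\<theta> \<ge> 0" "h \<in> mspace (Xspace \<theta>)" "s \<in> {-\<theta>..0}"
  shows "norm (h s) \<le> xnorm \<theta> h"
proof -
  have "continuous_on {-\<theta>..0} h" using assms Xspace_mem by blast
  then have "compact (h ` {-\<theta>..0})" by (simp add: compact_continuous_image)
  then have "bounded (h ` {-\<theta>..0})" by (rule compact_imp_bounded)
  then obtain B where "\<And>s. s \<in> {-\<theta>..0} \<Longrightarrow> norm (h s) \<le> B"
    unfolding bounded_iff by fastforce
  then have "bdd_above ((\<lambda>s. norm (h s)) ` {-\<theta>..0})"
    unfolding bdd_above_def by (intro exI[of _ B]) auto
  then show ?thesis unfolding xnorm_def using assms(3) by (rule cSUP_upper2) simp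
qed

lemma xnorm_le:
  assumes "\<theta> \<ge> 0" "\<And>s. s \<in> {-\<theta>..0} \<Longrightarrow> norm (h s) \<le> R"
  shows "xnorm \<theta> h \<le> R"
  unfolding xnorm_def using assms by (intro cSUP_least) auto

lemma hist_mem:
  assumes "\<theta> \<ge> 0" "continuous_on {-\<theta>..} x" "t \<ge> 0"
  shows "hist \<theta> x t \<in> mspace (Xspace \<theta>)"
proof -
  have "continuous_on {-\<theta>..0} (\<lambda>s. x (t + s))"
    by (rule continuous_on_compose2[OF assms(2)]) (auto intro!: continuous_intros simp: assms)
  then have "continuous_on {-\<theta>..0} (hist \<theta> x t)"
    unfolding hist_def by (rule continuous_on_cong[THEN iffD1, rotated 2]) auto
  then show ?thesis using assms(1) by (simp add: Xspace_mem hist_def)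
qed


lemma integral_lip:
  fixes g :: "real \<Rightarrow> 'a::euclidean_space"
  assumes "\<forall>t\<ge>0. (g has_integral (x t - x 0)) {0..t}" "0 \<le> a" "a \<le> b"
    "\<And>r. r \<in> {a..b} \<Longrightarrow> norm (g r) \<le> K" "0 \<le> K"
  shows "norm (x b - x a) \<le> K * (b - a)"
proof -
  have ib: "(g has_integral (x b - x 0)) {0..b}" and ia: "(g has_integral (x a - x 0)) {0..a}"
    using assms by auto
  have gi: "g integrable_on {0..b}" using ib by blast
  have "integral {0..a} g + integral {a..b} g = integral {0..b} g"
    by (rule Henstock_Kurzweil_Integration.integral_combine) (use assms gi in simp_all)
  then have eq: "x b - x a = integral {a..b} g"
    using ib ia by (simp add: integral_unique algebra_simps)
  have gab: "g integrable_on cbox a b"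
    using integrable_subinterval_real[OF gi, of a b] assms by simp
  have "norm (integral (cbox a b) g) \<le> K * Henstock_Kurzweil_Integration.content (cbox a b)"
    using assms by (intro integrable_bound[OF _ gab]) auto
  then show ?thesis using eq assms by simp
qed

lemma finite_min_delta:
  assumes "finite K" "\<forall>k\<in>K. \<exists>d>0. \<forall>a b. dist a b < (d::real) \<longrightarrow> P k a b"
  shows "\<exists>d>0. \<forall>k\<in>K. \<forall>a b. dist a b < d \<longrightarrow> P k a b"
  using assms
proof (induction K rule: finite_induct)
  case empty
  then show ?case by (auto intro: exI[of _ 1])
next
  case (insert k K)
  then obtain d1 where d1: "d1 > 0" "\<forall>k\<in>K. \<forall>a b. dist a b < d1 \<longrightarrow> P k a b" by auto
  obtain d2 where d2: "d2 > 0" "\<forall>a b. dist a b < d2 \<longrightarrow> P k a b" using insert by auto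
  show ?case using d1 d2 by (intro exI[of _ "min d1 d2"]) auto
qed

lemma S_equi:
  assumes th: "\<theta> \<ge> 0" and S: "compactin (mtopology_of (Xspace \<theta>)) S" and e: "e > 0"
  shows "\<exists>d>0. \<forall>\<xi>\<in>S. \<forall>a b. dist a b < d \<longrightarrow> a \<in> {-\<theta>..0} \<longrightarrow> b \<in> {-\<theta>..0} \<longrightarrow>
           dist (\<xi> a) (\<xi> b) < e"
proof -
  interpret X: Metric_space "mspace (Xspace \<theta>)" "mdist (Xspace \<theta>)"
    by (rule Metric_space_mspace_mdist)
  have "X.mtotally_bounded S"
    using S by (intro X.compactin_imp_mtotally_bounded) (simp add: mtopology_of_def)
  then obtain K where K: "finite K" "K \<subseteq> S" "S \<subseteq> (\<Union>x\<in>K. X.mball x (e/3))"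
    unfolding X.mtotally_bounded_def using e by (meson divide_pos_pos zero_less_numeral)
  have SX: "S \<subseteq> mspace (Xspace \<theta>)"
    using S compactin_subset_topspace by (fastforce simp: mtopology_of_def)
  have "\<forall>k\<in>K. \<exists>d>0. \<forall>a b. dist a b < d \<longrightarrow> (a \<in> {-\<theta>..0} \<longrightarrow> b \<in> {-\<theta>..0} \<longrightarrow>
           dist (k a) (k b) < e/3)"
  proof
    fix k assume "k \<in> K"
    then have "continuous_on {-\<theta>..0} k" using K SX th Xspace_mem by blast
    then have "uniformly_continuous_on {-\<theta>..0} k"
      by (intro compact_uniformly_continuous) auto
    then show "\<exists>d>0. \<forall>a b. dist a b < d \<longrightarrow> (a \<in> {-\<theta>..0} \<longrightarrow> b \<in> {-\<theta>..0} \<longrightarrow>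
           dist (k a) (k b) < e/3)"
      unfolding uniformly_continuous_on_def using e
      by (metis divide_pos_pos zero_less_numeral)
  qed
  from finite_min_delta[OF K(1) this] obtain d where d: "d > 0"
    "\<forall>k\<in>K. \<forall>a b. dist a b < d \<longrightarrow> (a \<in> {-\<theta>..0} \<longrightarrow> b \<in> {-\<theta>..0} \<longrightarrow>
           dist (k a) (k b) < e/3)" by blast
  show ?thesis
  proof (intro exI[of _ d] conjI ballI allI impI)
    show "d > 0" by (rule d(1))
  next
    fix \<xi> a b assume "\<xi> \<in> S" and ab: "dist a b < d" "a \<in> {-\<theta>..0}" "b \<in> {-\<theta>..0}"
    then obtain k where k: "k \<in> K" "\<xi> \<in> X.mball k (e/3)" using K by blast
    then have m: "mdist (Xspace \<theta>) k \<xi> < e/3" "k \<in> mspace (Xspace \<theta>)" "\<xi> \<in> mspace (Xspace \<theta>)"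
      by auto
    have 1: "dist (k a) (\<xi> a) < e/3" "dist (k b) (\<xi> b) < e/3"
      using Xspace_dist_le[OF m(2,3)] ab m(1) by (meson le_less_trans)+
    have 2: "dist (k a) (k b) < e/3" using d k ab by blast
    have "dist (\<xi> a) (\<xi> b) \<le> dist (\<xi> a) (k a) + dist (k a) (k b) + dist (k b) (\<xi> b)"
      by (smt (verit) dist_commute dist_triangle)
    then show "dist (\<xi> a) (\<xi> b) < e" using 1 2 by (simp add: dist_commute)
  qed
qed

lemma tb:
  assumes th: "\<theta> \<ge> 0" and sub: "R \<subseteq> mspace (Xspace \<theta>)"
    and bnd: "\<forall>h\<in>R. \<forall>s\<in>{-\<theta>..0}. norm (h s) \<le> M"
    and equi: "\<forall>e>0. \<exists>d>0. \<forall>h\<in>R. \<forall>a b. dist a b < d \<longrightarrow> a \<in> {-\<theta>..0} \<longrightarrow> b \<in> {-\<theta>..0} \<longrightarrow>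
           dist (h a) (h b) < e"
  shows "Metric_space.mtotally_bounded (mspace (Xspace \<theta>)) (mdist (Xspace \<theta>)) R"
proof -
  interpret X: Metric_space "mspace (Xspace \<theta>)" "mdist (Xspace \<theta>)"
    by (rule Metric_space_mspace_mdist)
  show ?thesis
    unfolding X.mtotally_bounded_sequentially
  proof (intro conjI allI impI)
    show "R \<subseteq> mspace (Xspace \<theta>)" by (rule sub)
    fix \<sigma> :: "nat \<Rightarrow> real \<Rightarrow> real^'a" assume r\<sigma>: "range \<sigma> \<subseteq> R"
    obtain g k where k: "strict_mono (k :: nat \<Rightarrow> nat)"
      and conv: "\<And>e. 0 < e \<Longrightarrow> \<exists>N. \<forall>n x. n \<ge> N \<and> x \<in> {-\<theta>..0} \<longrightarrow> norm(\<sigma>(k n) x - g x) < e"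
    proof (rule Arzela_Ascoli[of "{-\<theta>..0}" \<sigma> M])
      show "compact {-\<theta>..0::real}" by simp
      show "\<And>n x. x \<in> {-\<theta>..0} \<Longrightarrow> norm (\<sigma> n x) \<le> M" using r\<sigma> bnd by blast
      show "\<exists>d>0. \<forall>n y. y \<in> {-\<theta>..0} \<and> norm (x - y) < d \<longrightarrow> norm (\<sigma> n x - \<sigma> n y) < e"
        if xI: "x \<in> {-\<theta>..0}" and e0: "0 < e" for x e
      proof -
        obtain d where d: "d > 0" "\<forall>h\<in>R. \<forall>a b. dist a b < d \<longrightarrow> a \<in> {-\<theta>..0} \<longrightarrow> b \<in> {-\<theta>..0} \<longrightarrow>
           dist (h a) (h b) < e" using equi e0 by blast
        show ?thesis using d(1) d(2)[rule_format, of _ x] r\<sigma> xI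
          by (intro exI[of _ d]) (simp add: dist_norm image_subset_iff)
      qed
    qed (rule that; assumption)
    have "X.MCauchy (\<sigma> \<circ> k)"
      unfolding X.MCauchy_def
    proof (intro conjI allI impI)
      show "range (\<sigma> \<circ> k) \<subseteq> mspace (Xspace \<theta>)" using r\<sigma> sub by auto
      fix \<epsilon> :: real assume "\<epsilon> > 0"
      then obtain N where N: "\<forall>n x. n \<ge> N \<and> x \<in> {-\<theta>..0} \<longrightarrow> norm(\<sigma>(k n) x - g x) < \<epsilon>/3"
        using conv[of "\<epsilon>/3"] by auto
      show "\<exists>N. \<forall>n n'. N \<le> n \<longrightarrow> N \<le> n' \<longrightarrow> mdist (Xspace \<theta>) ((\<sigma> \<circ> k) n) ((\<sigma> \<circ> k) n') < \<epsilon>"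
      proof (intro exI[of _ N] allI impI)
        fix n n' assume nn: "N \<le> n" "N \<le> n'"
        have "mdist (Xspace \<theta>) ((\<sigma> \<circ> k) n) ((\<sigma> \<circ> k) n') \<le> 2*\<epsilon>/3"
        proof (rule Xspace_le_dist)
          show "0 \<le> 2*\<epsilon>/3" using \<open>\<epsilon> > 0\<close> by simp
          fix s assume s: "s \<in> {-\<theta>..0}"
          have "norm (\<sigma>(k n) s - g s) < \<epsilon>/3" "norm (\<sigma>(k n') s - g s) < \<epsilon>/3" using N nn s by auto
          then have "norm (\<sigma>(k n) s - \<sigma>(k n') s) < 2*\<epsilon>/3"
            using norm_triangle_lt[of "\<sigma>(k n) s - g s" "g s - \<sigma>(k n') s" "2*\<epsilon>/3"]
            by (simp add: norm_minus_commute)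
          then show "dist ((\<sigma> \<circ> k) n s) ((\<sigma> \<circ> k) n' s) \<le> 2*\<epsilon>/3" by (simp add: dist_norm)
        qed
        then show "mdist (Xspace \<theta>) ((\<sigma> \<circ> k) n) ((\<sigma> \<circ> k) n') < \<epsilon>" using \<open>\<epsilon> > 0\<close> by simp
      qed
    qed
    then show "\<exists>r. strict_mono r \<and> X.MCauchy (\<sigma> \<circ> r)" using k by blast
  qed
qed

lemma Xcomplete: "Metric_space.mcomplete (mspace (Xspace \<theta>)) (mdist (Xspace \<theta>))"
proof -
  have "mcomplete_of (cfunspace (top_of_set {-\<theta>..0}) Met_TC.Self :: (real \<Rightarrow> real^'n) metric)"
    by (rule Met_TC.mcomplete_cfunspace) (simp add: mcomplete_iff_complete complete_UNIV)
  then show ?thesis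
    by (simp add: mcomplete_of_def Xspace_def Met_TC.Self_def euclidean_metric_def)
qed

theorem lemma2p3:
  fixes \<theta> T :: real
    and f :: "(real \<Rightarrow> real^'n) \<Rightarrow> real^'m \<Rightarrow> real^'n"
    and S :: "(real \<Rightarrow> real^'n) set"
    and U :: "(real^'m) set"
  assumes "\<theta> > 0"
    and "loc_lipschitz \<theta> f"
    and "bounded_on_bounded \<theta> f"
    and "RFC \<theta> f"
    and "compactin (mtopology_of (Xspace \<theta>)) S"
    and "bounded U"
    and "T > 0"
  shows "compactin (mtopology_of (Xspace \<theta>))
           ((mtopology_of (Xspace \<theta>)) closure_of (reach_set \<theta> f T U S))"
proof -
  have th: "\<theta> \<ge> 0" using assms(1) by simp
  interpret X: Metric_space "mspace (Xspace \<theta>)" "mdist (Xspace \<theta>)"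
    by (rule Metric_space_mspace_mdist)
  have SX: "S \<subseteq> mspace (Xspace \<theta>)"
    using assms(5) compactin_subset_topspace by (fastforce simp: mtopology_of_def)
  have "X.mbounded S" using assms(5) by (intro X.compactin_imp_mbounded) (simp add: mtopology_of_def)
  then obtain c B0 where cB: "S \<subseteq> X.mcball c B0" unfolding X.mbounded_def by blast
  define Rs where "Rs = xnorm \<theta> c + B0"
  have Rs: "norm (\<xi> s) \<le> Rs" if "\<xi> \<in> S" "s \<in> {-\<theta>..0}" for \<xi> s
  proof -
    have c: "c \<in> mspace (Xspace \<theta>)" "\<xi> \<in> mspace (Xspace \<theta>)" "mdist (Xspace \<theta>) c \<xi> \<le> B0"
      using cB that by auto
    have "dist (c s) (\<xi> s) \<le> B0" using Xspace_dist_le[OF c(1,2) that(2)] c(3) by simp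
    moreover have "norm (c s) \<le> xnorm \<theta> c" by (rule xnorm_ge[OF th c(1) that(2)])
    ultimately show ?thesis unfolding Rs_def
      by (smt (verit) dist_norm norm_triangle_ineq2 norm_minus_commute)
  qed
  obtain B where B: "\<And>v. v \<in> U \<Longrightarrow> norm v \<le> B" using assms(6) bounded_iff by blast
  define R0 where "R0 = max (max Rs B) 1"
  have R0: "R0 > 0" "Rs \<le> R0" "B \<le> R0" unfolding R0_def by auto
  obtain C where C: "\<forall>\<xi>\<in>mspace (Xspace \<theta>). \<forall>u\<in>inputs. \<forall>x. \<forall>t\<in>{0..T}.
        xnorm \<theta> \<xi> \<le> R0 \<and> unorm_le u R0 \<and> is_solution \<theta> f \<xi> u x
          \<longrightarrow> xnorm \<theta> (hist \<theta> x t) \<le> C"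
    using assms(4) assms(7) R0(1) unfolding RFC_def by blast
  obtain K0 where K0: "\<forall>\<xi>\<in>mspace (Xspace \<theta>). \<forall>v.
        xnorm \<theta> \<xi> \<le> max C B \<and> norm v \<le> max C B \<longrightarrow> norm (f \<xi> v) \<le> K0"
    using assms(3) unfolding bounded_on_bounded_def by blast
  define K where "K = \<bar>K0\<bar> + 1"
  have K: "K > 0" "K0 \<le> K" unfolding K_def by auto
  have sol: "(\<forall>r\<in>{0..T}. \<forall>s\<in>{-\<theta>..0}. norm (x (r+s)) \<le> C) \<and>
      (\<forall>a b. 0 \<le> a \<longrightarrow> a \<le> b \<longrightarrow> b \<le> T \<longrightarrow> norm (x b - x a) \<le> K*(b-a)) \<and>
      (\<forall>s\<in>{-\<theta>..0}. x s = \<xi> s) \<and> continuous_on {-\<theta>..} x"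
    if \<xi>: "\<xi> \<in> S" and u: "u \<in> inputs_in U" and x: "is_solution \<theta> f \<xi> u x" for \<xi> u x
  proof -
    have xs: "\<forall>s\<in>{-\<theta>..0}. x s = \<xi> s" "continuous_on {-\<theta>..} x"
      "\<forall>t\<ge>0. ((\<lambda>s. f (hist \<theta> x s) (u s)) has_integral (x t - x 0)) {0..t}"
      using x unfolding is_solution_def by auto
    have uin: "u \<in> inputs" "\<forall>t\<ge>0. u t \<in> U" using u unfolding inputs_in_def by auto
    have xn: "xnorm \<theta> \<xi> \<le> R0" using xnorm_le[OF th, of \<xi> R0] Rs \<xi> R0 by force
    have un: "unorm_le u R0" unfolding unorm_le_def
    proof (rule AE_I2)
      fix t assume "t \<in> space (lebesgue_on {0::real..})"
      then have "t \<ge> 0" by simp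
      then show "norm (u t) \<le> R0" using uin B R0 by force
    qed
    have hb: "xnorm \<theta> (hist \<theta> x r) \<le> C" if "r \<in> {0..T}" for r
      using C \<xi> SX uin xn un x that by blast
    have hm: "hist \<theta> x r \<in> mspace (Xspace \<theta>)" if "r \<in> {0..T}" for r
      using hist_mem[OF th xs(2)] that by simp
    have pt: "\<forall>r\<in>{0..T}. \<forall>s\<in>{-\<theta>..0}. norm (x (r+s)) \<le> C"
    proof (intro ballI)
      fix r s assume r: "r \<in> {0..T}" and s: "s \<in> {-\<theta>..0}"
      have "norm (hist \<theta> x r s) \<le> C" using xnorm_ge[OF th hm[OF r] s] hb[OF r] by linarith
      then show "norm (x (r+s)) \<le> C" using s by (simp add: hist_def)
    qed
    have fb: "norm (f (hist \<theta> x r) (u r)) \<le> K" if "r \<in> {0..T}" for r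
    proof -
      have "norm (u r) \<le> B" using uin B that by simp
      then have "norm (f (hist \<theta> x r) (u r)) \<le> K0"
        using K0 hm[OF that] hb[OF that] by force
      then show ?thesis using K by linarith
    qed
    have lip: "\<forall>a b. 0 \<le> a \<longrightarrow> a \<le> b \<longrightarrow> b \<le> T \<longrightarrow> norm (x b - x a) \<le> K*(b-a)"
    proof (intro allI impI)
      fix a b :: real assume ab: "0 \<le> a" "a \<le> b" "b \<le> T"
      show "norm (x b - x a) \<le> K*(b-a)"
        by (rule integral_lip[OF xs(3) ab(1,2)]) (use fb ab K in auto)
    qed
    show ?thesis using pt lip xs by blast
  qed
  let ?R = "reach_set \<theta> f T U S"
  have RX: "?R \<subseteq> mspace (Xspace \<theta>)"
    unfolding reach_set_def using hist_mem[OF th] sol by blast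
  have bnd: "\<forall>h\<in>?R. \<forall>s\<in>{-\<theta>..0}. norm (h s) \<le> C"
    unfolding reach_set_def using sol by (force simp: hist_def)
  have equi: "\<forall>e>0. \<exists>d>0. \<forall>h\<in>?R. \<forall>a b. dist a b < d \<longrightarrow> a \<in> {-\<theta>..0} \<longrightarrow> b \<in> {-\<theta>..0} \<longrightarrow>
           dist (h a) (h b) < e"
  proof (intro allI impI)
    fix e :: real assume e: "e > 0"
    obtain dS where dS: "dS > 0" "\<forall>\<xi>\<in>S. \<forall>a b. dist a b < dS \<longrightarrow> a \<in> {-\<theta>..0} \<longrightarrow> b \<in> {-\<theta>..0} \<longrightarrow>
           dist (\<xi> a) (\<xi> b) < e/2"
      using S_equi[OF th assms(5), of "e/2"] e by auto
    define d where "d = min dS (e/(2*K))"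
    have d: "d > 0" "d \<le> dS" "d \<le> e/(2*K)" unfolding d_def using dS e K by auto
    have Kd: "K * y < e/2" if "y < d" "0 \<le> y" for y
    proof -
      have "K * y < K * (e/(2*K))" using that d K by (intro mult_strict_left_mono) auto
      also have "\<dots> = e/2" using K by simp
      finally show ?thesis .
    qed
    have key: "norm (x q - x p) < e"
      if \<xi>: "\<xi> \<in> S" and u: "u \<in> inputs_in U" and x: "is_solution \<theta> f \<xi> u x"
        and pq: "-\<theta> \<le> p" "p \<le> q" "q \<le> T" "q - p < d" for \<xi> u x p q
    proof -
      note sx = sol[OF \<xi> u x]
      have lip: "\<And>a b. 0 \<le> a \<Longrightarrow> a \<le> b \<Longrightarrow> b \<le> T \<Longrightarrow> norm (x b - x a) \<le> K*(b-a)"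
        using sx by blast
      have init: "\<And>s. s \<in> {-\<theta>..0} \<Longrightarrow> x s = \<xi> s" using sx by blast
      have dSx: "\<And>a b. dist a b < dS \<Longrightarrow> a \<in> {-\<theta>..0} \<Longrightarrow> b \<in> {-\<theta>..0} \<Longrightarrow> dist (\<xi> a) (\<xi> b) < e/2"
        using dS \<xi> by blast
      consider "q \<le> 0" | "0 \<le> p" | "p < 0" "0 < q" by linarith
      then show ?thesis
      proof cases
        case 1
        have "dist (\<xi> q) (\<xi> p) < e/2" using pq 1 d by (intro dSx) (auto simp: dist_real_def)
        then show ?thesis using init pq 1 e by (simp add: dist_norm)
      next
        case 2
        have "norm (x q - x p) \<le> K*(q-p)" using lip 2 pq by simp
        also have "\<dots> < e/2" using Kd pq by simp
        finally show ?thesis using e by simp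
      next
        case 3
        have a: "norm (x q - x 0) \<le> K*(q-0)" using lip[of 0 q] 3 pq by simp
        also have "\<dots> < e/2" using Kd pq 3 by simp
        finally have a': "norm (x q - x 0) < e/2" .
        have "dist (\<xi> 0) (\<xi> p) < e/2" using pq 3 d th by (intro dSx) (auto simp: dist_real_def)
        then have b: "norm (x 0 - x p) < e/2" using init pq 3 th by (simp add: dist_norm)
        have "norm (x q - x p) \<le> norm (x q - x 0) + norm (x 0 - x p)"
          using norm_triangle_ineq[of "x q - x 0" "x 0 - x p"] by simp
        then show ?thesis using a' b by simp
      qed
    qed
    show "\<exists>d>0. \<forall>h\<in>?R. \<forall>a b. dist a b < d \<longrightarrow> a \<in> {-\<theta>..0} \<longrightarrow> b \<in> {-\<theta>..0} \<longrightarrow>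
           dist (h a) (h b) < e"
    proof (intro exI[of _ d] conjI ballI allI impI)
      show "d > 0" by (rule d(1))
    next
      fix h a b assume h: "h \<in> ?R" and ab: "dist a b < d" "a \<in> {-\<theta>..0}" "b \<in> {-\<theta>..0}"
      from h obtain t u \<xi> x where tx: "h = hist \<theta> x t" "0 \<le> t" "t \<le> T" "u \<in> inputs_in U" "\<xi> \<in> S"
        "is_solution \<theta> f \<xi> u x" unfolding reach_set_def by blast
      have ha: "h a = x (t + a)" "h b = x (t + b)" using tx ab by (auto simp: hist_def)
      show "dist (h a) (h b) < e"
      proof (cases "a \<le> b")
        case True
        have "norm (x (t+b) - x (t+a)) < e"
          using ab tx True by (intro key[OF tx(5,4,6)]) (auto simp: dist_real_def)
        then show ?thesis using ha by (simp add: dist_norm norm_minus_commute)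
      next
        case False
        have "norm (x (t+a) - x (t+b)) < e"
          using ab tx False by (intro key[OF tx(5,4,6)]) (auto simp: dist_real_def)
        then show ?thesis using ha by (simp add: dist_norm)
      qed
    qed
  qed
  have "X.mtotally_bounded ?R" by (rule tb[OF th RX bnd equi])
  then have "compactin X.mtopology (X.mtopology closure_of ?R)"
    using X.mtotally_bounded_eq_compact_closure_of[OF Xcomplete] by blast
  then show ?thesis by (simp add: mtopology_of_def)
qed

end
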